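(* Let $G=(K\cup I,E)$ be a split graph such that no vertex $i\in I$ satisfies $N(i)=K$, and let $(V,\mathcal{F})$ be its split graph vertex shelling antimatroid. Then the number of paths of $(V,\mathcal{F})$ equals $|V|$ plus the number of edges of $G$ having one endpoint in $K$ and the other in $I$.
   Context: A split graph $G=(K\cup I,E)$ is a finite simple graph whose vertex set $V=K\cup I$ comes with a fixed partition into a clique $K$ and an independent set $I$. $N(v)$ is the set of neighbours of $v$. A vertex is simplicial if its neighbours induce a clique. The split graph vertex shelling antimatroid of $G$ is $(V,\mathcal{F})$ where $F\subseteq V$ is feasible iff there is an ordering $f_1,\dots,f_{|F|}$ of $F$ such that each $f_j$ is simplicial in $G$ minus $\{f_1,\dots,f_{j-1}\}$ (the empty set is feasible). A path of an antimatroid $(V,\mathcal{F})$ is a nonempty feasible set that is not the union of two feasible sets both different from it (equivalently, a feasible set containing exactly one element whose removal leaves a feasible set). *)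

theory Defs
  imports Main
begin

definition simple_graph :: "'a set \<Rightarrow> ('a \<Rightarrow> 'a \<Rightarrow> bool) \<Rightarrow> bool" where
  "simple_graph V E \<longleftrightarrow> finite V \<and> (\<forall>u v. E u v \<longrightarrow> u \<in> V \<and> v \<in> V)
     \<and> (\<forall>u v. E u v \<longrightarrow> E v u) \<and> (\<forall>v. \<not> E v v)"

definition split_graph :: "'a set \<Rightarrow> 'a set \<Rightarrow> ('a \<Rightarrow> 'a \<Rightarrow> bool) \<Rightarrow> bool" where
  "split_graph K I E \<longleftrightarrow> simple_graph (K \<union> I) E \<and> K \<inter> I = {}
     \<and> (\<forall>u\<in>K. \<forall>v\<in>K. u \<noteq> v \<longrightarrow> E u v)
     \<and> (\<forall>u\<in>I. \<forall>v\<in>I. \<not> E u v)"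

definition nbhd :: "'a set \<Rightarrow> ('a \<Rightarrow> 'a \<Rightarrow> bool) \<Rightarrow> 'a \<Rightarrow> 'a set" where
  "nbhd V E v = {u \<in> V. E v u}"

definition simplicial_in :: "'a set \<Rightarrow> ('a \<Rightarrow> 'a \<Rightarrow> bool) \<Rightarrow> 'a \<Rightarrow> bool" where
  "simplicial_in W E v \<longleftrightarrow> v \<in> W \<and>
     (\<forall>x\<in>nbhd W E v. \<forall>y\<in>nbhd W E v. x \<noteq> y \<longrightarrow> E x y)"

definition shelling_feasible :: "'a set \<Rightarrow> ('a \<Rightarrow> 'a \<Rightarrow> bool) \<Rightarrow> 'a set \<Rightarrow> bool" where
  "shelling_feasible V E F \<longleftrightarrow> (\<exists>fs. distinct fs \<and> set fs = F \<and>
     (\<forall>j < length fs. simplicial_in (V - set (take j fs)) E (fs ! j)))"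

definition antimatroid_path :: "('a set \<Rightarrow> bool) \<Rightarrow> 'a set \<Rightarrow> bool" where
  "antimatroid_path feas P \<longleftrightarrow> feas P \<and> P \<noteq> {} \<and>
     \<not> (\<exists>A B. feas A \<and> feas B \<and> A \<noteq> P \<and> B \<noteq> P \<and> P = A \<union> B)"

end

theory Submission
  imports Defs
begin

locale sg =
  fixes K I :: "'a set" and E :: "'a \<Rightarrow> 'a \<Rightarrow> bool"
  assumes sgr: "split_graph K I E"
    and hyp: "\<forall>i\<in>I. nbhd (K \<union> I) E i \<noteq> K"
begin

lemma finV: "finite (K \<union> I)" and inV: "E u v \<Longrightarrow> u \<in> K \<union> I \<and> v \<in> K \<union> I"
  and sym: "E u v \<Longrightarrow> E v u" and irr: "\<not> E v v" and disj: "K \<inter> I = {}"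
  and cliq: "u \<in> K \<Longrightarrow> v \<in> K \<Longrightarrow> u \<noteq> v \<Longrightarrow> E u v"
  and indep: "u \<in> I \<Longrightarrow> v \<in> I \<Longrightarrow> \<not> E u v"
  using sgr unfolding split_graph_def simple_graph_def by blast+

lemma EI_K: "i \<in> I \<Longrightarrow> E i u \<Longrightarrow> u \<in> K"
  using inV indep by blast

lemma nonnb: "i \<in> I \<Longrightarrow> \<exists>k'\<in>K. \<not> E i k'"
proof -
  assume i: "i \<in> I"
  have "nbhd (K \<union> I) E i \<subseteq> K" using EI_K[OF i] unfolding nbhd_def by blast
  moreover have "nbhd (K \<union> I) E i \<noteq> K" using hyp i by blast
  ultimately obtain k' where "k' \<in> K" "k' \<notin> nbhd (K \<union> I) E i" by blast
  then show ?thesis unfolding nbhd_def by blast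
qed

abbreviation "feas \<equiv> shelling_feasible (K \<union> I) E"

lemma feas_sub: "feas F \<Longrightarrow> F \<subseteq> K \<union> I"
  unfolding shelling_feasible_def simplicial_in_def
  by (metis Diff_iff in_set_conv_nth subsetI)

lemma feas_empty: "feas {}"
  unfolding shelling_feasible_def by auto

lemma feas_add:
  assumes "feas F" "x \<notin> F" "simplicial_in (K \<union> I - F) E x"
  shows "feas (insert x F)"
proof -
  obtain fs where fs: "distinct fs" "set fs = F"
    "\<forall>j < length fs. simplicial_in (K \<union> I - set (take j fs)) E (fs ! j)"
    using assms(1) unfolding shelling_feasible_def by blast
  let ?g = "fs @ [x]"
  have "\<forall>j < length ?g. simplicial_in (K \<union> I - set (take j ?g)) E (?g ! j)"
  proof (intro allI impI)
    fix j assume j: "j < length ?g"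
    show "simplicial_in (K \<union> I - set (take j ?g)) E (?g ! j)"
    proof (cases "j < length fs")
      case True then show ?thesis using fs(3) by (simp add: nth_append)
    next
      case False then have "j = length fs" using j by simp
      then show ?thesis using assms(3) fs(2) by simp
    qed
  qed
  moreover have "distinct ?g" using fs assms(2) by simp
  moreover have "set ?g = insert x F" using fs by simp
  ultimately show ?thesis unfolding shelling_feasible_def by blast
qed

lemma simp_gen:
  assumes "x \<in> W" "\<And>u. u \<in> W \<Longrightarrow> E x u \<Longrightarrow> u \<in> C"
    "\<And>u v. u \<in> C \<Longrightarrow> v \<in> C \<Longrightarrow> u \<noteq> v \<Longrightarrow> E u v"
  shows "simplicial_in W E x"
  using assms unfolding simplicial_in_def nbhd_def by blast

lemma feas_addI: "finite S \<Longrightarrow> S \<subseteq> I \<Longrightarrow> feas F \<Longrightarrow> feas (F \<union> S)"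
proof (induction S rule: finite_induct)
  case empty then show ?case by simp
next
  case (insert x S)
  show ?case
  proof (cases "x \<in> F \<union> S")
    case True then show ?thesis using insert by (simp add: insert_absorb)
  next
    case False
    have "simplicial_in (K \<union> I - (F \<union> S)) E x"
      by (rule simp_gen[where C=K]) (use insert False EI_K cliq in auto)
    then have "feas (insert x (F \<union> S))" using feas_add insert False by auto
    then show ?thesis by simp
  qed
qed

definition NI where "NI k = {y\<in>I. E k y}"

lemma feas_addK: "finite T \<Longrightarrow> T \<subseteq> K \<Longrightarrow> (\<forall>k\<in>T. NI k \<subseteq> F) \<Longrightarrow> feas F \<Longrightarrow> feas (F \<union> T)"
proof (induction T rule: finite_induct)
  case empty then show ?case by simp
next
  case (insert x T)
  show ?case
  proof (cases "x \<in> F \<union> T")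
    case True then show ?thesis using insert by (simp add: insert_absorb)
  next
    case False
    have "simplicial_in (K \<union> I - (F \<union> T)) E x"
    proof (rule simp_gen[where C=K])
      show "x \<in> K \<union> I - (F \<union> T)" using insert False by auto
    next
      fix u assume "u \<in> K \<union> I - (F \<union> T)" "E x u"
      then show "u \<in> K" using insert.prems(2) unfolding NI_def by auto
    qed (use cliq in auto)
    then have "feas (insert x (F \<union> T))" using feas_add insert False by auto
    then show ?thesis by simp
  qed
qed

definition Bpre where "Bpre k i = {k'\<in>K. \<not> E i k'} \<union> ({y\<in>I. E k y \<and> y \<noteq> i} \<union> {y\<in>I. \<exists>k'\<in>K. \<not> E i k' \<and> E k' y})"

definition fL :: "'a + 'a \<times> 'a \<Rightarrow> 'a set" where
  "fL lab = (case lab of Inl v \<Rightarrow> (if v \<in> I then {v} else insert v (NI v)) | Inr p \<Rightarrow> insert (fst p) (Bpre (fst p) (snd p)))"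

definition ep :: "'a + 'a \<times> 'a \<Rightarrow> 'a" where
  "ep lab = (case lab of Inl v \<Rightarrow> v | Inr p \<Rightarrow> fst p)"

definition Ed where "Ed = {(k,i). k \<in> K \<and> i \<in> I \<and> E k i}"

definition Lab where "Lab = Inl ` (K \<union> I) \<union> Inr ` Ed"

lemma finI: "finite I" and finK: "finite K" using finV by auto

lemma ep_in: "ep lab \<in> fL lab"
  unfolding ep_def fL_def by (cases lab) auto

lemma feas_lab: assumes "lab \<in> Lab" shows "feas (fL lab - {ep lab}) \<and> feas (fL lab)"
proof (cases lab)
  case (Inl v)
  then have v: "v \<in> K \<union> I" using assms unfolding Lab_def by auto
  show ?thesis
  proof (cases "v \<in> I")
    case True
    have "feas ({} \<union> {v})" by (rule feas_addI) (use True feas_empty in auto)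
    then show ?thesis using Inl True feas_empty unfolding fL_def ep_def by auto
  next
    case False
    have fn: "feas ({} \<union> NI v)" by (rule feas_addI) (use finI feas_empty in \<open>auto simp: NI_def\<close>)
    have vn: "v \<notin> NI v" using False unfolding NI_def by auto
    have "simplicial_in (K \<union> I - NI v) E v"
    proof (rule simp_gen[where C=K])
      show "v \<in> K \<union> I - NI v" using v vn by auto
    next
      fix u assume "u \<in> K \<union> I - NI v" "E v u"
      then show "u \<in> K" unfolding NI_def by auto
    qed (use cliq in auto)
    then have "feas (insert v (NI v))" using feas_add fn vn by auto
    then show ?thesis using Inl False fn vn unfolding fL_def ep_def by auto
  qed
next
  case (Inr p)
  obtain k i where p: "p = (k,i)" by (cases p)
  have ki: "k \<in> K" "i \<in> I" "E k i" using assms Inr p unfolding Lab_def Ed_def by auto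
  define S where "S = {y\<in>I. E k y \<and> y \<noteq> i} \<union> {y\<in>I. \<exists>k'\<in>K. \<not> E i k' \<and> E k' y}"
  define T where "T = {k'\<in>K. \<not> E i k'}"
  have fS: "feas ({} \<union> S)" by (rule feas_addI) (use finI feas_empty in \<open>auto simp: S_def\<close>)
  have fST: "feas (S \<union> T)" by (rule feas_addK) (use finK fS in \<open>auto simp: S_def T_def NI_def\<close>)
  have BP: "Bpre k i = S \<union> T" unfolding Bpre_def S_def T_def by auto
  have kn: "k \<notin> Bpre k i" using ki disj sym unfolding Bpre_def by auto
  have "simplicial_in (K \<union> I - Bpre k i) E k"
  proof (rule simp_gen[where C="insert i {u\<in>K. E i u}"])
    show "k \<in> K \<union> I - Bpre k i" using ki kn by auto
  next
    fix u assume u: "u \<in> K \<union> I - Bpre k i" "E k u"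
    then show "u \<in> insert i {u\<in>K. E i u}" unfolding Bpre_def by auto
  next
    fix u v assume "u \<in> insert i {u\<in>K. E i u}" "v \<in> insert i {u\<in>K. E i u}" "u \<noteq> v"
    then show "E u v" using cliq sym by auto
  qed
  then have "feas (insert k (Bpre k i))" using feas_add fST BP kn by auto
  then show ?thesis using Inr p fST BP kn unfolding fL_def ep_def by auto
qed

lemma notin_take:
  assumes "distinct fs" "j < length fs" "j' \<le> j"
  shows "fs ! j \<notin> set (take j' fs)"
proof
  assume "fs ! j \<in> set (take j' fs)"
  then obtain m where m: "m < length (take j' fs)" "take j' fs ! m = fs ! j"
    by (auto simp: in_set_conv_nth)
  then have "fs ! m = fs ! j" "m < j'" "m < length fs" by auto
  then have "m = j" using assms nth_eq_iff_index_eq by blast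
  then show False using \<open>m < j'\<close> assms by simp
qed

lemma necessary:
  assumes "feas P" "x \<in> P"
  shows "\<exists>lab\<in>Lab. ep lab = x \<and> fL lab \<subseteq> P"
proof -
  have xV: "x \<in> K \<union> I" using feas_sub assms by auto
  show ?thesis
  proof (cases "x \<in> I")
    case True
    then show ?thesis using assms xV
      by (intro bexI[of _ "Inl x"]) (auto simp: fL_def ep_def Lab_def)
  next
    case xI: False
    then have xK: "x \<in> K" using xV by auto
    show ?thesis
    proof (cases "NI x \<subseteq> P")
      case True
      then show ?thesis using assms xV xI
        by (intro bexI[of _ "Inl x"]) (auto simp: fL_def ep_def Lab_def)
    next
      case False
      then obtain i where i: "i \<in> I" "E x i" "i \<notin> P" unfolding NI_def by auto
      obtain fs where fs: "distinct fs" "set fs = P"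
        "\<forall>j < length fs. simplicial_in (K \<union> I - set (take j fs)) E (fs ! j)"
        using assms(1) unfolding shelling_feasible_def by blast
      obtain j where j: "j < length fs" "fs ! j = x" using fs(2) assms(2) by (auto simp: in_set_conv_nth)
      define W where "W = K \<union> I - set (take j fs)"
      have tP: "\<And>m. set (take m fs) \<subseteq> P" using fs(2) set_take_subset by metis
      have sW: "simplicial_in W E x" using fs(3) j unfolding W_def by auto
      have iW: "i \<in> W" using i tP unfolding W_def by blast
      have a: "\<And>u. u \<in> W \<Longrightarrow> E x u \<Longrightarrow> u \<noteq> i \<Longrightarrow> E i u"
      proof -
        fix u assume "u \<in> W" "E x u" "u \<noteq> i"
        have "i \<in> nbhd W E x" "u \<in> nbhd W E x" using iW i(2) \<open>u \<in> W\<close> \<open>E x u\<close> unfolding nbhd_def by auto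
        then show "E i u" using sW \<open>u \<noteq> i\<close> unfolding simplicial_in_def by metis
      qed
      have b: "\<And>y. y \<in> I \<Longrightarrow> E x y \<Longrightarrow> y \<noteq> i \<Longrightarrow> y \<in> P"
      proof (rule ccontr)
        fix y assume y: "y \<in> I" "E x y" "y \<noteq> i" "y \<notin> P"
        then have "y \<in> W" using tP unfolding W_def by blast
        then show False using a y i indep by blast
      qed
      have Eix: "E i x" using i sym by auto
      have c: "\<And>k'. k' \<in> K \<Longrightarrow> \<not> E i k' \<Longrightarrow> k' \<in> set (take j fs)"
      proof (rule ccontr)
        fix k' assume k': "k' \<in> K" "\<not> E i k'" "k' \<notin> set (take j fs)"
        then have "k' \<in> W" unfolding W_def by auto
        moreover have "k' \<noteq> x" using k' Eix by auto
        moreover have "k' \<noteq> i" using k' i disj by auto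
        ultimately show False using a k' cliq xK by blast
      qed
      have d: "\<And>y k'. y \<in> I \<Longrightarrow> k' \<in> K \<Longrightarrow> \<not> E i k' \<Longrightarrow> E k' y \<Longrightarrow> y \<in> P"
      proof (rule ccontr)
        fix y k' assume y: "y \<in> I" "k' \<in> K" "\<not> E i k'" "E k' y" "y \<notin> P"
        obtain j' where j': "j' < length (take j fs)" "take j fs ! j' = k'"
          using c[OF y(2,3)] by (auto simp: in_set_conv_nth)
        then have j'': "j' < j" "fs ! j' = k'" "j' < length fs" by auto
        define W' where "W' = K \<union> I - set (take j' fs)"
        have sW': "simplicial_in W' E k'" using fs(3) j'' unfolding W'_def by auto
        have yW: "y \<in> W'" using y tP unfolding W'_def by blast
        have "x \<notin> set (take j' fs)" using notin_take[OF fs(1) j(1), of j'] j j'' by simp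
        then have xW: "x \<in> W'" using xV unfolding W'_def by auto
        have "k' \<noteq> x" using y Eix by auto
        then have "E k' x" using cliq y xK by auto
        moreover have "x \<noteq> y" using xK y disj by auto
        ultimately have "E x y" using sW' xW yW y(4) unfolding simplicial_in_def nbhd_def by blast
        moreover have "y \<noteq> i" using y sym by auto
        ultimately show False using b y by blast
      qed
      have "Bpre x i \<subseteq> P" unfolding Bpre_def using b c d tP by blast
      then show ?thesis using assms xK i
        by (intro bexI[of _ "Inr (x,i)"]) (auto simp: fL_def ep_def Lab_def Ed_def)
    qed
  qed
qed

lemma incomp:
  assumes "l1 \<in> Lab" "l2 \<in> Lab" "ep l1 = ep l2" "fL l1 \<subseteq> fL l2"
  shows "l1 = l2"
proof (cases l1)
  case (Inl v)
  show ?thesis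
  proof (cases l2)
    case (Inl w) then show ?thesis using \<open>l1 = Inl v\<close> assms(3) by (simp add: ep_def)
  next
    case (Inr p)
    obtain k i where p: "p = (k,i)" by (cases p)
    have ki: "k \<in> K" "i \<in> I" "E k i" using assms(2) Inr p unfolding Lab_def Ed_def by auto
    have vk: "v = k" using assms(3) Inl Inr p by (simp add: ep_def)
    have vI: "v \<notin> I" using vk ki disj by auto
    have "i \<in> fL l1" using Inl vk vI ki unfolding fL_def NI_def by auto
    moreover have "i \<notin> fL l2" using Inr p ki disj sym unfolding fL_def Bpre_def by auto
    ultimately show ?thesis using assms(4) by blast
  qed
next
  case (Inr p)
  obtain k i where p: "p = (k,i)" by (cases p)
  have ki: "k \<in> K" "i \<in> I" "E k i" using assms(1) Inr p unfolding Lab_def Ed_def by auto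
  obtain k' where k': "k' \<in> K" "\<not> E i k'" using nonnb ki by blast
  have k'in: "k' \<in> fL l1" using Inr p k' unfolding fL_def Bpre_def by auto
  show ?thesis
  proof (cases l2)
    case (Inl v)
    have vk: "v = k" using assms(3) Inl Inr p by (simp add: ep_def)
    have vI: "v \<notin> I" using vk ki disj by auto
    have "k' \<notin> fL l2" using Inl vk vI ki k' disj sym unfolding fL_def NI_def by auto
    then show ?thesis using k'in assms(4) by blast
  next
    case (Inr q)
    obtain k2 i2 where q: "q = (k2,i2)" by (cases q)
    have ki2: "k2 \<in> K" "i2 \<in> I" "E k2 i2" using assms(2) Inr q unfolding Lab_def Ed_def by auto
    have kk: "k2 = k" using assms(3) Inr q \<open>l1 = Inr p\<close> p by (simp add: ep_def)
    show ?thesis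
    proof (cases "i2 = i")
      case True then show ?thesis using kk Inr q \<open>l1 = Inr p\<close> p by simp
    next
      case False
      have "i2 \<in> fL l1" using \<open>l1 = Inr p\<close> p ki2 kk False unfolding fL_def Bpre_def by auto
      moreover have "i2 \<notin> fL l2" using Inr q ki2 disj sym unfolding fL_def Bpre_def by auto
      ultimately show ?thesis using assms(4) by blast
    qed
  qed
qed

lemma fill:
  assumes "lab \<in> Lab" "feas A" "A \<subseteq> fL lab" "ep lab \<in> A"
  shows "A = fL lab"
proof -
  obtain l' where l': "l' \<in> Lab" "ep l' = ep lab" "fL l' \<subseteq> A"
    using necessary[OF assms(2,4)] by blast
  then have "l' = lab" using incomp[OF l'(1) assms(1)] assms(3) by blast
  then show ?thesis using l' assms(3) by blast
qed

lemma inj: "inj_on fL Lab"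
proof (rule inj_onI)
  fix l1 l2 assume l: "l1 \<in> Lab" "l2 \<in> Lab" "fL l1 = fL l2"
  show "l1 = l2"
  proof (cases "ep l1 = ep l2")
    case True then show ?thesis using incomp l by blast
  next
    case False
    have f: "feas (fL l2 - {ep l2})" using feas_lab l by blast
    have "ep l1 \<in> fL l2 - {ep l2}" using ep_in[of l1] l False by auto
    then have "fL l2 - {ep l2} = fL l1" using fill[OF l(1) f] l by auto
    then show ?thesis using ep_in[of l2] l by auto
  qed
qed

lemma prefix_feas:
  assumes "distinct fs" "\<forall>j < length fs. simplicial_in (K \<union> I - set (take j fs)) E (fs ! j)"
  shows "feas (set (take m fs))"
  unfolding shelling_feasible_def
  by (rule exI[of _ "take m fs"]) (use assms in \<open>auto simp: min_def\<close>)

lemma paths_eq: "{P. antimatroid_path feas P} = fL ` Lab"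
proof
  show "{P. antimatroid_path feas P} \<subseteq> fL ` Lab"
  proof
    fix P assume "P \<in> {P. antimatroid_path feas P}"
    then have P: "feas P" "P \<noteq> {}" "\<not> (\<exists>A B. feas A \<and> feas B \<and> A \<noteq> P \<and> B \<noteq> P \<and> P = A \<union> B)"
      unfolding antimatroid_path_def by auto
    obtain fs where fs: "distinct fs" "set fs = P"
      "\<forall>j < length fs. simplicial_in (K \<union> I - set (take j fs)) E (fs ! j)"
      using P(1) unfolding shelling_feasible_def by blast
    have ne: "fs \<noteq> []" using fs P by auto
    define e where "e = last fs"
    have fsd: "fs = butlast fs @ [e]" using ne e_def by simp
    have bt: "butlast fs = take (length fs - 1) fs" by (simp add: butlast_conv_take)
    have f1: "feas (set (butlast fs))" using prefix_feas[OF fs(1) fs(3)] bt by simp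
    have eP: "e \<in> P" using fs(2) ne e_def by auto
    have en: "e \<notin> set (butlast fs)" using fs(1) fsd by (metis distinct_append not_distinct_conv_prefix
          distinct.simps(2) distinct1_rotate rotate1.simps(2))
    have sb: "set (butlast fs) \<subseteq> P" using fs(2) fsd by (metis Un_iff set_append subsetI)
    have Pe: "P = insert e (set (butlast fs))" using fs(2) fsd by (metis list.simps(15) rotate1.simps(2) set_rotate1)
    obtain lab where lab: "lab \<in> Lab" "ep lab = e" "fL lab \<subseteq> P" using necessary[OF P(1) eP] by blast
    have "P = set (butlast fs) \<union> fL lab" using Pe lab ep_in[of lab] sb by auto
    moreover have "set (butlast fs) \<noteq> P" using en eP by auto
    moreover have "feas (fL lab)" using feas_lab lab by blast
    ultimately have "fL lab = P" using P(3) f1 by blast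
    then show "P \<in> fL ` Lab" using lab by blast
  qed
next
  show "fL ` Lab \<subseteq> {P. antimatroid_path feas P}"
  proof
    fix P assume "P \<in> fL ` Lab"
    then obtain lab where lab: "lab \<in> Lab" "P = fL lab" by blast
    have "\<not> (\<exists>A B. feas A \<and> feas B \<and> A \<noteq> P \<and> B \<noteq> P \<and> P = A \<union> B)"
    proof
      assume "\<exists>A B. feas A \<and> feas B \<and> A \<noteq> P \<and> B \<noteq> P \<and> P = A \<union> B"
      then obtain A B where AB: "feas A" "feas B" "A \<noteq> P" "B \<noteq> P" "P = A \<union> B" by blast
      have "ep lab \<in> A \<or> ep lab \<in> B" using ep_in[of lab] lab AB by auto
      then show False using fill[OF lab(1)] AB lab by blast
    qed
    moreover have "feas P" "P \<noteq> {}" using feas_lab lab ep_in[of lab] by auto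
    ultimately show "P \<in> {P. antimatroid_path feas P}" unfolding antimatroid_path_def by blast
  qed
qed

lemma finEd: "finite Ed"
proof -
  have "Ed \<subseteq> K \<times> I" unfolding Ed_def by auto
  then show ?thesis using finK finI finite_subset by blast
qed

lemma count: "card {P. antimatroid_path feas P}
    = card (K \<union> I) + card {e. \<exists>k\<in>K. \<exists>i\<in>I. E k i \<and> e = {k, i}}"
proof -
  have "card {P. antimatroid_path feas P} = card Lab" using paths_eq inj card_image by metis
  also have "card Lab = card (Inl ` (K \<union> I) :: ('a + 'a \<times> 'a) set) + card (Inr ` Ed :: ('a + 'a \<times> 'a) set)"
    unfolding Lab_def by (rule card_Un_disjoint) (use finV finEd in auto)
  also have "\<dots> = card (K \<union> I) + card Ed" by (simp add: card_image)
  also have "card Ed = card {e. \<exists>k\<in>K. \<exists>i\<in>I. E k i \<and> e = {k, i}}"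
  proof -
    have im: "{e. \<exists>k\<in>K. \<exists>i\<in>I. E k i \<and> e = {k, i}} = (\<lambda>(k,i). {k,i}) ` Ed"
      unfolding Ed_def by auto
    have "inj_on (\<lambda>(k,i). {k,i}) Ed"
    proof (rule inj_onI)
      fix a b assume ab: "a \<in> Ed" "b \<in> Ed" "(\<lambda>(k,i). {k,i}) a = (\<lambda>(k,i). {k,i}) b"
      obtain k i k2 i2 where "a = (k,i)" "b = (k2,i2)" by (cases a, cases b)
      then show "a = b" using ab disj unfolding Ed_def by (auto simp: doubleton_eq_iff)
    qed
    then show ?thesis using im card_image by metis
  qed
  finally show ?thesis .
qed

end

theorem mainTheorem11:
  fixes K I :: "'a set" and E :: "'a \<Rightarrow> 'a \<Rightarrow> bool"
  assumes "split_graph K I E"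
    and "\<forall>i\<in>I. nbhd (K \<union> I) E i \<noteq> K"
  shows "card {P. antimatroid_path (shelling_feasible (K \<union> I) E) P}
    = card (K \<union> I) + card {e. \<exists>k\<in>K. \<exists>i\<in>I. E k i \<and> e = {k, i}}"
proof -
  interpret sg K I E using assms by unfold_locales
  show ?thesis by (rule count)
qed

end
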